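(* Let $S$ be a semiring satisfying the standing assumptions below. Every basis $\{\beta_1,\dots,\beta_n\}$ of $S^n$ consists of vectors each of which has exactly one nonzero entry, and that nonzero entry is a unit of $S$; that is, each $\beta_i$ is of the form $(0,\dots,0,a_i,0,\dots,0)$ with $a_i \in U(S)$.
   Context: A semiring $(S,+,\cdot)$ here means: $(S,+)$ is a commutative monoid with zero $0$, $(S,\cdot)$ is a commutative monoid with identity $1$, multiplication distributes over addition, and $0$ is absorbing. Standing assumptions on $S$: $S$ is additively idempotent ($a+a=a$), multiplicatively cancellative (for every nonzero $a$, $ba=ca$ implies $b=c$), and additively unit irreducible (if $a+b$ is a unit then $a$ or $b$ is a unit). $U(S)$ is the set of units of $S$. $S^n$ is the semimodule of all $1\times n$ matrices over $S$ (componentwise addition and scalar multiplication). A set $D$ is linearly independent if no $x\in D$ lies in the set of finite $S$-linear combinations of $D\setminus\{x\}$; a basis is a linearly independent spanning set. *)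

theory Defs
  imports "HOL-Analysis.Analysis"
begin

definition add_idempotent :: "('a::comm_semiring_1) itself \<Rightarrow> bool" where
  "add_idempotent _ \<longleftrightarrow> (\<forall>a::'a. a + a = a)"

definition mult_cancellative :: "('a::comm_semiring_1) itself \<Rightarrow> bool" where
  "mult_cancellative _ \<longleftrightarrow> (\<forall>a b c::'a. a \<noteq> 0 \<longrightarrow> b * a = c * a \<longrightarrow> b = c)"

definition is_unit_sr :: "'a::comm_semiring_1 \<Rightarrow> bool" where
  "is_unit_sr a \<longleftrightarrow> (\<exists>b. a * b = 1)"

definition add_unit_irreducible :: "('a::comm_semiring_1) itself \<Rightarrow> bool" where
  "add_unit_irreducible _ \<longleftrightarrow>
     (\<forall>a b::'a. is_unit_sr (a + b) \<longrightarrow> is_unit_sr a \<or> is_unit_sr b)"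

definition smult_vec :: "'a::comm_semiring_1 \<Rightarrow> 'a ^ 'n \<Rightarrow> 'a ^ 'n" where
  "smult_vec c v = (\<chi> i. c * v $ i)"

definition lin_comb :: "('a::comm_semiring_1 ^ 'n) set \<Rightarrow> ('a ^ 'n) set" where
  "lin_comb D = {\<Sum>v\<in>F. smult_vec (c v) v | F c. finite F \<and> F \<subseteq> D}"

definition lin_indep :: "('a::comm_semiring_1 ^ 'n) set \<Rightarrow> bool" where
  "lin_indep D \<longleftrightarrow> (\<forall>x\<in>D. x \<notin> lin_comb (D - {x}))"

definition is_basis :: "('a::comm_semiring_1 ^ 'n) set \<Rightarrow> bool" where
  "is_basis D \<longleftrightarrow> lin_indep D \<and> lin_comb D = UNIV"

end

theory Submission
  imports Defs
begin

lemma zsf_sum: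
  fixes f :: "'b \<Rightarrow> 'a::comm_semiring_1"
  assumes idem: "add_idempotent TYPE('a)" and fin: "finite F" and s: "sum f F = 0"
  shows "\<forall>x\<in>F. f x = 0"
proof -
  have zsf: "\<And>a b::'a. a + b = 0 \<Longrightarrow> a = 0 \<and> b = 0"
  proof -
    fix a b :: 'a assume h: "a + b = 0"
    have "a = a + (a + b)" using h by simp
    also have "\<dots> = (a + a) + b" by (simp add: add.assoc)
    also have "\<dots> = 0" using idem h by (simp add: add_idempotent_def)
    finally have a0: "a = 0" .
    then show "a = 0 \<and> b = 0" using h by simp
  qed
  from fin s show ?thesis
    by (induct F rule: finite_induct) (auto dest: zsf)
qed

lemma unit_sum:
  fixes f :: "'b \<Rightarrow> 'a::comm_semiring_1"
  assumes irr: "add_unit_irreducible TYPE('a)" and fin: "finite F"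
    and s: "is_unit_sr (sum f F)"
  shows "\<exists>x\<in>F. is_unit_sr (f x)"
  using fin s
proof (induct F rule: finite_induct)
  case empty
  then show ?case by (simp add: is_unit_sr_def)
next
  case (insert x F)
  then have "is_unit_sr (f x + sum f F)" by simp
  then have "is_unit_sr (f x) \<or> is_unit_sr (sum f F)"
    using irr by (simp add: add_unit_irreducible_def)
  then show ?case using insert by auto
qed

lemma unit_mult:
  fixes a b :: "'a::comm_semiring_1"
  assumes "is_unit_sr (a * b)" shows "is_unit_sr a" "is_unit_sr b"
  using assms unfolding is_unit_sr_def
  by (metis mult.assoc mult.commute)+

lemma unit_nz: "is_unit_sr (a::'a::comm_semiring_1) \<Longrightarrow> a \<noteq> 0"
  by (auto simp: is_unit_sr_def)

lemma lc_comp: "(\<Sum>v\<in>F. smult_vec (c v) v) $ j = (\<Sum>v\<in>F. c v * v $ j)"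
  by (simp add: smult_vec_def)

theorem corollary2p5:
  fixes B :: "('a::comm_semiring_1 ^ 'n) set"
  assumes "add_idempotent TYPE('a)"
    and "mult_cancellative TYPE('a)"
    and "add_unit_irreducible TYPE('a)"
    and "is_basis B"
  shows "\<forall>\<beta>\<in>B. \<exists>i. \<beta> $ i \<noteq> 0 \<and> is_unit_sr (\<beta> $ i) \<and> (\<forall>j. j \<noteq> i \<longrightarrow> \<beta> $ j = 0)"
proof -
  have mc: "\<And>a b c::'a. a \<noteq> 0 \<Longrightarrow> b * a = c * a \<Longrightarrow> b = c"
    using assms(2) unfolding mult_cancellative_def by blast
  have ex: "\<exists>w\<in>B. is_unit_sr (w $ i) \<and> (\<forall>j. j \<noteq> i \<longrightarrow> w $ j = 0)" for i
  proof -
    let ?e = "(\<chi> j. if j = i then 1 else 0) :: 'a ^ 'n"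
    have "?e \<in> lin_comb B" using assms(4) by (simp add: is_basis_def)
    then obtain F c where F: "finite F" "F \<subseteq> B" and e: "?e = (\<Sum>v\<in>F. smult_vec (c v) v)"
      unfolding lin_comb_def by blast
    have "is_unit_sr (\<Sum>v\<in>F. c v * v $ i)"
      using arg_cong[OF e, of "\<lambda>x. x $ i"] by (simp add: smult_vec_def is_unit_sr_def)
    then obtain v where v: "v \<in> F" "is_unit_sr (c v * v $ i)"
      using unit_sum[OF assms(3) F(1)] by blast
    have "v $ j = 0" if "j \<noteq> i" for j
    proof -
      have "(\<Sum>v\<in>F. c v * v $ j) = 0"
        using arg_cong[OF e, of "\<lambda>x. x $ j"] that by (simp add: smult_vec_def)
      then have "c v * v $ j = 0" using zsf_sum[OF assms(1) F(1)] v(1) by blast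
      moreover have "c v \<noteq> 0" using unit_mult(1)[OF v(2)] unit_nz by blast
      ultimately have "v $ j * c v = 0 * c v" by (simp add: mult.commute)
      then show ?thesis by (rule mc[OF \<open>c v \<noteq> 0\<close>])
    qed
    moreover have "is_unit_sr (v $ i)" using unit_mult(2)[OF v(2)] .
    moreover have "v \<in> B" using v(1) F(2) by blast
    ultimately show ?thesis by blast
  qed
  then have "\<forall>i. \<exists>w. w \<in> B \<and> is_unit_sr (w $ i) \<and> (\<forall>j. j \<noteq> i \<longrightarrow> w $ j = 0)"
    by blast
  from choice[OF this] obtain w where W:
    "\<forall>i. w i \<in> B \<and> is_unit_sr (w i $ i) \<and> (\<forall>j. j \<noteq> i \<longrightarrow> w i $ j = 0)"
    by blast
  have w: "\<And>i. w i \<in> B" "\<And>i. is_unit_sr (w i $ i)"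
      "\<And>i j. j \<noteq> i \<Longrightarrow> w i $ j = 0"
    using W by auto
  have injw: "inj w"
  proof (rule injI)
    fix x y assume "w x = w y"
    then have "w y $ x = w x $ x" by simp
    moreover have "w x $ x \<noteq> 0" using w(2) unit_nz by blast
    ultimately show "x = y" using w(3)[of x y] by auto
  qed
  define u where "u j = (SOME b. w j $ j * b = 1)" for j
  have u: "w j $ j * u j = 1" for j
    using w(2)[of j] unfolding is_unit_sr_def u_def by (rule someI_ex)
  show ?thesis
  proof
    fix \<beta> assume b: "\<beta> \<in> B"
    define c where "c v = \<beta> $ (inv w v) * u (inv w v)" for v
    have eq: "(\<Sum>v\<in>range w. smult_vec (c v) v) = \<beta>"
    proof (rule vec_eq_iff[THEN iffD2], rule allI)
      fix k
      have "(\<Sum>v\<in>range w. smult_vec (c v) v) $ k = (\<Sum>v\<in>range w. c v * v $ k)"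
        by (rule lc_comp)
      also have "\<dots> = (\<Sum>j\<in>UNIV. c (w j) * w j $ k)"
        by (subst sum.reindex[OF injw]) simp
      also have "\<dots> = (\<Sum>j\<in>UNIV. \<beta> $ j * u j * w j $ k)"
        by (simp add: c_def inv_f_f[OF injw])
      also have "\<dots> = \<beta> $ k * u k * w k $ k"
      proof -
        have "(\<Sum>j\<in>UNIV. \<beta> $ j * u j * w j $ k) = \<beta> $ k * u k * w k $ k
              + (\<Sum>j\<in>UNIV - {k}. \<beta> $ j * u j * w j $ k)"
          by (rule sum.remove) auto
        also have "(\<Sum>j\<in>UNIV - {k}. \<beta> $ j * u j * w j $ k) = 0"
          by (rule sum.neutral) (auto simp: w(3))
        finally show ?thesis by simp
      qed
      also have "\<dots> = \<beta> $ k * (w k $ k * u k)"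
        by (simp only: mult.assoc mult.commute[of "u k"])
      also have "\<dots> = \<beta> $ k" using u[of k] by simp
      finally show "(\<Sum>v\<in>range w. smult_vec (c v) v) $ k = \<beta> $ k" .
    qed
    show "\<exists>i. \<beta> $ i \<noteq> 0 \<and> is_unit_sr (\<beta> $ i) \<and> (\<forall>j. j \<noteq> i \<longrightarrow> \<beta> $ j = 0)"
    proof (cases "\<beta> \<in> range w")
      case True
      then obtain i where "\<beta> = w i" by blast
      then show ?thesis using w(2)[of i] w(3)[of _ i] unit_nz[OF w(2)[of i]] by blast
    next
      case False
      then have "range w \<subseteq> B - {\<beta>}" using w(1) by blast
      then have "\<exists>F c'. \<beta> = (\<Sum>v\<in>F. smult_vec (c' v) v) \<and> finite F \<and> F \<subseteq> B - {\<beta>}"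
        using eq[symmetric] by (intro exI[of _ "range w"] exI[of _ c]) simp
      then have "\<beta> \<in> lin_comb (B - {\<beta>})"
        unfolding lin_comb_def by (rule CollectI)
      then show ?thesis using assms(4) b by (simp add: is_basis_def lin_indep_def)
    qed
  qed
qed

end
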